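(* Let $G$ be a finitely generated group and $\psi$ a minimal action of $G$ by orientation-preserving homeomorphisms of $\mathbb{R}$ such that some nondegenerate bounded interval is $\psi$-contractible, but not every bounded interval is $\psi$-contractible. Define $\varphi(x) := \sup\{ y > x : [x,y] \text{ is } \psi\text{-contractible}\}$. Then $\varphi$ is a (finite-valued) orientation-preserving homeomorphism of $\mathbb{R}$ satisfying $\varphi(x)>x$ for all $x$ and $\varphi\circ\psi(g)=\psi(g)\circ\varphi$ for all $g\in G$. Consequently $\psi$ induces an action of $G$ by homeomorphisms on the quotient $\mathbb{R}/\!\sim$, where $x\sim\varphi(x)$, which is a topological circle.
   Context: A bounded interval $I$ is $\psi$-contractible if there is a sequence $g_n\in G$ such that the intervals $\psi(g_n)(I)$ converge to a point (their lengths tend to $0$ and they converge to a single point). A minimal action is one where every orbit is dense. *)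

theory Defs
  imports "HOL-Analysis.Analysis" "HOL-Algebra.Generated_Groups"
begin

definition fin_gen_group :: "('a, 'b) monoid_scheme \<Rightarrow> bool" where
  "fin_gen_group G \<longleftrightarrow> group G \<and> (\<exists>S. finite S \<and> S \<subseteq> carrier G \<and> generate G S = carrier G)"

definition or_homeo :: "(real \<Rightarrow> real) \<Rightarrow> bool" where
  "or_homeo f \<longleftrightarrow> (\<exists>f'. homeomorphism UNIV UNIV f f') \<and> strict_mono f"

definition or_action :: "('a, 'b) monoid_scheme \<Rightarrow> ('a \<Rightarrow> real \<Rightarrow> real) \<Rightarrow> bool" where
  "or_action G \<psi> \<longleftrightarrow> (\<forall>g\<in>carrier G. or_homeo (\<psi> g)) \<and>
     (\<forall>g\<in>carrier G. \<forall>h\<in>carrier G. \<psi> (g \<otimes>\<^bsub>G\<^esub> h) = \<psi> g \<circ> \<psi> h) \<and>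
     \<psi> \<one>\<^bsub>G\<^esub> = id"

definition minimal_action :: "('a, 'b) monoid_scheme \<Rightarrow> ('a \<Rightarrow> real \<Rightarrow> real) \<Rightarrow> bool" where
  "minimal_action G \<psi> \<longleftrightarrow> (\<forall>x. closure {\<psi> g x | g. g \<in> carrier G} = UNIV)"

text \<open>a (nonempty) bounded interval I is contractible if there are g_n with
  psi(g_n)(I) converging to a point: inf and sup of the images both tend to the same point\<close>
definition contractible :: "('a, 'b) monoid_scheme \<Rightarrow> ('a \<Rightarrow> real \<Rightarrow> real) \<Rightarrow> real set \<Rightarrow> bool" where
  "contractible G \<psi> I \<longleftrightarrow> (\<exists>s p. (\<forall>n. s n \<in> carrier G) \<and>
      ((\<lambda>n. Inf (\<psi> (s n) ` I)) \<longlonglongrightarrow> p) \<and> ((\<lambda>n. Sup (\<psi> (s n) ` I)) \<longlonglongrightarrow> p))"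

definition contr_sup :: "('a, 'b) monoid_scheme \<Rightarrow> ('a \<Rightarrow> real \<Rightarrow> real) \<Rightarrow> real \<Rightarrow> real" where
  "contr_sup G \<psi> x = Sup {y. y > x \<and> contractible G \<psi> {x..y}}"

end

theory Submission
  imports Defs
begin


lemma strict_mono_dense_isCont:
  fixes f :: "real \<Rightarrow> real"
  assumes sm: "strict_mono f" and dense: "\<And>a b. a < b \<Longrightarrow> \<exists>x. a < f x \<and> f x < b"
  shows "isCont f x"
  unfolding continuous_at_eps_delta
proof (intro allI impI)
  fix e :: real assume e: "e > 0"
  obtain u where u: "f x - e < f u" "f u < f x" using dense[of "f x - e" "f x"] e by auto
  obtain v where v: "f x < f v" "f v < f x + e" using dense[of "f x" "f x + e"] e by auto
  have ux: "u < x" using u(2) sm by (metis not_less_iff_gr_or_eq strict_mono_less)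
  have xv: "x < v" using v(1) sm by (metis not_less_iff_gr_or_eq strict_mono_less)
  show "\<exists>d>0. \<forall>x'. dist x' x < d \<longrightarrow> dist (f x') (f x) < e"
  proof (intro exI[of _ "min (x-u) (v-x)"] conjI allI impI)
    show "0 < min (x - u) (v - x)" using ux xv by auto
    fix t assume "dist t x < min (x - u) (v - x)"
    then have "u < t" "t < v" by (auto simp: dist_real_def)
    then have "f u < f t" "f t < f v" using sm by (auto simp: strict_mono_less)
    then show "dist (f t) (f x) < e" using u v by (auto simp: dist_real_def)
  qed
qed

lemma strict_mono_surj_homeo:
  fixes f :: "real \<Rightarrow> real"
  assumes sm: "strict_mono f" and su: "surj f"
  shows "homeomorphism UNIV UNIV f (inv_into UNIV f)" "continuous_on UNIV f" "continuous_on UNIV (inv_into UNIV f)"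
    "strict_mono (inv_into UNIV f)"
proof -
  have inj: "inj f" using sm strict_mono_imp_inj_on by blast
  have fi: "f (inv_into UNIV f y) = y" for y using su by (simp add: surj_f_inv_f)
  have if_: "inv_into UNIV f (f y) = y" for y using inj by simp
  have cf: "continuous_on UNIV f"
  proof (rule continuous_at_imp_continuous_on, rule ballI, rule strict_mono_dense_isCont[OF sm])
    fix a b :: real assume "a < b"
    then show "\<exists>x. a < f x \<and> f x < b"
      by (intro exI[of _ "inv_into UNIV f ((a+b)/2)"]) (simp add: fi)
  qed
  have smi: "strict_mono (inv_into UNIV f)"
  proof (rule strict_monoI)
    fix x y :: real assume xy: "x < y"
    show "inv_into UNIV f x < inv_into UNIV f y"
    proof (rule ccontr)
      assume "\<not> inv_into UNIV f x < inv_into UNIV f y"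
      then have "f (inv_into UNIV f y) \<le> f (inv_into UNIV f x)" using sm by (simp add: strict_mono_less_eq)
      then show False using xy by (simp add: fi)
    qed
  qed
  have ci: "continuous_on UNIV (inv_into UNIV f)"
  proof (rule continuous_at_imp_continuous_on, rule ballI, rule strict_mono_dense_isCont[OF smi])
    fix a b :: real assume "a < b"
    then show "\<exists>x. a < inv_into UNIV f x \<and> inv_into UNIV f x < b"
      by (intro exI[of _ "f ((a+b)/2)"]) (simp add: if_)
  qed
  show "homeomorphism UNIV UNIV f (inv_into UNIV f)"
    by (intro homeomorphismI cf ci) (auto simp: inj su surj_f_inv_f)
  show "continuous_on UNIV f" "continuous_on UNIV (inv_into UNIV f)" "strict_mono (inv_into UNIV f)" by fact+
qed

lemma iterate_unbounded:
  fixes g :: "real \<Rightarrow> real"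
  assumes cg: "continuous_on UNIV g" and nf: "\<And>x. g x \<noteq> x"
    and mono: "monoseq (\<lambda>n. (g ^^ n) x0)" and bd: "\<And>n. \<bar>(g ^^ n) x0\<bar> \<le> B"
  shows False
proof -
  let ?u = "\<lambda>n. (g ^^ n) x0"
  have "Bseq ?u" using bd by (intro BseqI'[of _ B]) auto
  then have "convergent ?u" using mono Bseq_monoseq_convergent by blast
  then obtain L where L: "?u \<longlonglongrightarrow> L" by (auto simp: convergent_def)
  have "(\<lambda>n. g (?u n)) \<longlonglongrightarrow> g L"
  proof -
    have "isCont g L" using cg by (simp add: continuous_on_eq_continuous_at)
    then show ?thesis using isCont_tendsto_compose[OF _ L] by blast
  qed
  moreover have eq: "(\<lambda>n. ?u (Suc n)) = (\<lambda>n. g (?u n))" by simp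
  ultimately have "(\<lambda>n. ?u (Suc n)) \<longlonglongrightarrow> g L" by (simp only: eq)
  moreover have "(\<lambda>n. ?u (Suc n)) \<longlonglongrightarrow> L" using L LIMSEQ_Suc by blast
  ultimately have "g L = L" using LIMSEQ_unique by blast
  then show False using nf by blast
qed




lemma strict_mono_funpow: "strict_mono (g::real\<Rightarrow>real) \<Longrightarrow> strict_mono (g ^^ n)"
  by (induction n) (auto simp: strict_mono_def)

lemma continuous_funpow: "continuous_on UNIV (g::real\<Rightarrow>real) \<Longrightarrow> continuous_on UNIV (g ^^ n)"
proof (induction n)
  case 0 then show ?case by (simp add: id_def)
next
  case (Suc n) then show ?case
    by (simp add: continuous_on_compose2[of UNIV g UNIV "g ^^ n"])
qed

lemma funpow_comm_gen: "(\<And>x. g (f x) = f (g x)) \<Longrightarrow> g ((f ^^ n) x) = (f ^^ n) (g x)"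
  by (induction n) auto

locale shift =
  fixes f fi :: "real \<Rightarrow> real"
  assumes hom: "homeomorphism UNIV UNIV f fi" and sm: "strict_mono f" and gt: "\<And>x. f x > x"
begin

lemma fi_f[simp]: "fi (f x) = x" using hom by (simp add: homeomorphism_def)
lemma f_fi[simp]: "f (fi x) = x" using hom by (simp add: homeomorphism_def)
lemma cont_f: "continuous_on UNIV f" using hom by (simp add: homeomorphism_def)
lemma cont_fi: "continuous_on UNIV fi" using hom by (simp add: homeomorphism_def)
lemma sm_fi: "strict_mono fi"
  unfolding strict_mono_def by (metis f_fi not_less_iff_gr_or_eq sm strict_mono_less)
lemma lt_fi: "fi x < x" using gt[of "fi x"] by simp

lemma fipow_fpow[simp]: "(fi ^^ n) ((f ^^ n) x) = x"
  by (induction n arbitrary: x) (auto simp: funpow_swap1)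
lemma fpow_fipow[simp]: "(f ^^ n) ((fi ^^ n) x) = x"
  by (induction n arbitrary: x) (auto simp: funpow_swap1)
lemma fipow_f: "(fi ^^ n) (f x) = f ((fi ^^ n) x)"
  by (rule funpow_comm_gen[symmetric]) (metis f_fi fi_f)

definition Phi :: "int \<Rightarrow> real \<Rightarrow> real" where
  "Phi k = (if 0 \<le> k then f ^^ nat k else fi ^^ nat (-k))"

lemma Phi_succ: "Phi (k+1) x = f (Phi k x)"
proof (cases "0 \<le> k")
  case True
  then have "nat (k+1) = Suc (nat k)" by simp
  then show ?thesis using True by (simp add: Phi_def)
next
  case False
  define m where "m = nat (-k) - 1"
  have m: "nat (-k) = Suc m" "nat (-(k+1)) = m" unfolding m_def using False by arith+
  show ?thesis
  proof (cases "k = -1")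
    case True then show ?thesis by (simp add: Phi_def)
  next
    case False
    then have "\<not> 0 \<le> k + 1" using \<open>\<not> 0 \<le> k\<close> by auto
    then show ?thesis using \<open>\<not> 0 \<le> k\<close> m by (simp add: Phi_def)
  qed
qed

lemma Phi_pred: "Phi (k-1) x = fi (Phi k x)"
  using Phi_succ[of "k-1" x] by (metis diff_add_cancel fi_f)

lemma Phi_0[simp]: "Phi 0 x = x" by (simp add: Phi_def)

lemma Phi_add_nat: "Phi (k + int n) x = (f ^^ n) (Phi k x)"
proof (induction n)
  case 0 then show ?case by simp
next
  case (Suc n)
  have "Phi (k + int (Suc n)) x = Phi ((k + int n) + 1) x" by (simp add: algebra_simps)
  also have "\<dots> = f (Phi (k + int n) x)" by (rule Phi_succ)
  finally show ?case using Suc by simp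
qed

lemma Phi_sub_nat: "Phi (k - int n) x = (fi ^^ n) (Phi k x)"
proof (induction n)
  case 0 then show ?case by simp
next
  case (Suc n)
  have "Phi (k - int (Suc n)) x = Phi ((k - int n) - 1) x" by (simp add: algebra_simps)
  also have "\<dots> = fi (Phi (k - int n) x)" by (rule Phi_pred)
  finally show ?case using Suc by simp
qed

lemma Phi_comm: "Phi k (f x) = f (Phi k x)"
  by (simp add: Phi_def funpow_swap1 fipow_f)

lemma Phi_sm: "strict_mono (Phi k)"
  by (simp add: Phi_def strict_mono_funpow sm sm_fi)

lemma Phi_cont: "continuous_on UNIV (Phi k)"
  by (simp add: Phi_def continuous_funpow cont_f cont_fi)

lemma fpow_ge: "x \<le> (f ^^ n) x"
  by (induction n) (auto intro: order.trans less_imp_le[OF gt])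

lemma Phi_mono0: "k \<le> l \<Longrightarrow> Phi k 0 \<le> Phi l 0"
  using Phi_add_nat[of k "nat (l-k)" 0] fpow_ge by simp

definition "a0 = f 0"
lemma a0_pos: "a0 > 0" using gt[of 0] by (simp add: a0_def)

definition H :: "real \<Rightarrow> real" where
  "H t = Phi \<lfloor>t\<rfloor> (a0 * (t - of_int \<lfloor>t\<rfloor>))"

lemma H_int: "H (of_int k) = Phi k 0" by (simp add: H_def)

lemma H_piece:
  assumes "of_int n \<le> t" "t \<le> of_int n + 1"
  shows "H t = Phi n (a0 * (t - of_int n))"
proof (cases "t < of_int n + 1")
  case True
  then have "\<lfloor>t\<rfloor> = n" using assms by linarith
  then show ?thesis by (simp add: H_def)
next
  case False
  then have t: "t = of_int (n+1)" using assms by simp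
  have "H t = Phi (n+1) 0" by (simp add: t H_int del: of_int_add)
  also have "\<dots> = f (Phi n 0)" by (rule Phi_succ)
  also have "\<dots> = Phi n (a0 * (t - of_int n))" by (simp add: t Phi_comm a0_def)
  finally show ?thesis .
qed

lemma H_cont_piece: "continuous_on {of_int n..of_int n + 1} H"
proof -
  have "continuous_on {of_int n..of_int n + 1} (\<lambda>t. Phi n (a0 * (t - of_int n)))"
  proof -
    have "continuous_on {of_int n..of_int n + 1} (\<lambda>t. a0 * (t - of_int n))"
      by (intro continuous_intros)
    then have "continuous_on {of_int n..of_int n + 1} (Phi n \<circ> (\<lambda>t. a0 * (t - of_int n)))"
      by (rule continuous_on_compose) (rule continuous_on_subset[OF Phi_cont], simp)
    then show ?thesis by (simp add: o_def)
  qed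
  then show ?thesis
  proof (rule continuous_on_eq)
    fix x assume "x \<in> {real_of_int n..real_of_int n + 1}"
    then show "Phi n (a0 * (x - of_int n)) = H x" using H_piece[of n x] by simp
  qed
qed

lemma H_cont: "continuous_on UNIV H"
proof (intro continuous_at_imp_continuous_on ballI)
  fix t :: real
  define n where "n = \<lfloor>t\<rfloor>"
  have c1: "continuous_on {of_int n - 1..of_int n} H"
    using H_cont_piece[of "n-1"] by simp
  have c2: "continuous_on {of_int n..of_int n + 1} H" by (rule H_cont_piece)
  have eq: "{of_int n - 1..of_int n} \<union> {of_int n..of_int n + 1} = {of_int n - 1..of_int n + (1::real)}"
    by (rule ivl_disj_un_two_touch) simp_all
  have "continuous_on {of_int n - 1..of_int n + (1::real)} H"
    unfolding eq[symmetric] by (intro continuous_on_closed_Un c1 c2 closed_atLeastAtMost)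
  moreover have "t \<in> interior {of_int n - 1..of_int n + (1::real)}"
    unfolding n_def by simp linarith
  ultimately show "isCont H t" by (rule continuous_on_interior)
qed

lemma H_succ: "H (t + 1) = f (H t)"
proof -
  have "\<lfloor>t+1\<rfloor> = \<lfloor>t\<rfloor> + 1" by simp
  then show ?thesis by (simp add: H_def Phi_succ)
qed

lemma H_add_nat: "H (t + of_nat n) = (f ^^ n) (H t)"
proof (induction n)
  case 0 then show ?case by simp
next
  case (Suc n)
  have "H (t + of_nat (Suc n)) = H ((t + of_nat n) + 1)" by (simp add: algebra_simps)
  then show ?case using Suc by (simp add: H_succ)
qed

lemma H_sub_nat: "H (t - of_nat n) = (fi ^^ n) (H t)"
  using H_add_nat[of "t - of_nat n" n] by (metis diff_add_cancel fipow_fpow)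

lemma H_sm: "strict_mono H"
proof (rule strict_monoI)
  fix s t :: real assume st: "s < t"
  define n where "n = \<lfloor>s\<rfloor>"
  define m where "m = \<lfloor>t\<rfloor>"
  have nm: "n \<le> m" unfolding n_def m_def using st by (simp add: floor_mono)
  have s1: "of_int n \<le> s" "s < of_int n + 1" unfolding n_def by linarith+
  have t1: "of_int m \<le> t" "t < of_int m + 1" unfolding m_def by linarith+
  show "H s < H t"
  proof (cases "n = m")
    case True
    then show ?thesis using s1 t1 st H_piece[of n s] H_piece[of n t] Phi_sm[of n] a0_pos
      by (simp add: strict_mono_less)
  next
    case False
    then have nm': "n + 1 \<le> m" using nm by simp
    have "H s < H (of_int n + 1)"
      using s1 H_piece[of n s] H_piece[of n "of_int n + 1"] Phi_sm[of n] a0_pos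
      by (simp add: strict_mono_less)
    also have "\<dots> = Phi (n+1) 0" using H_int[of "n+1"] by simp
    also have "\<dots> \<le> Phi m 0" using nm' by (rule Phi_mono0)
    also have "\<dots> \<le> H t"
      using t1 H_piece[of m t] Phi_sm[of m] a0_pos
      by (simp add: strict_mono_less_eq)
    finally show ?thesis .
  qed
qed

lemma f_unbounded: "\<exists>n. y \<le> (f ^^ n) 0"
proof (rule ccontr)
  assume "\<not> ?thesis"
  then have b: "\<And>n. (f ^^ n) 0 < y" by (meson not_le)
  show False
  proof (rule iterate_unbounded[OF cont_f, of 0 "\<bar>y\<bar>"])
    show "f x \<noteq> x" for x using gt[of x] by simp
    show "monoseq (\<lambda>n. (f ^^ n) 0)"
      by (rule incseq_imp_monoseq, rule incseq_SucI) (simp add: less_imp_le[OF gt])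
    show "\<bar>(f ^^ n) 0\<bar> \<le> \<bar>y\<bar>" for n using b[of n] fpow_ge[of 0 n] by simp
  qed
qed

lemma fipow_le: "(fi ^^ n) x \<le> x"
  by (induction n) (auto intro: order.trans less_imp_le[OF lt_fi])

lemma fi_unbounded: "\<exists>n. (fi ^^ n) 0 \<le> y"
proof (rule ccontr)
  assume "\<not> ?thesis"
  then have b: "\<And>n. y < (fi ^^ n) 0" by (meson not_le)
  show False
  proof (rule iterate_unbounded[OF cont_fi, of 0 "\<bar>y\<bar>"])
    show "fi x \<noteq> x" for x using lt_fi[of x] by simp
    show "monoseq (\<lambda>n. (fi ^^ n) 0)"
      by (rule decseq_imp_monoseq, rule decseq_SucI) (simp add: less_imp_le[OF lt_fi])
    show "\<bar>(fi ^^ n) 0\<bar> \<le> \<bar>y\<bar>" for n using b[of n] fipow_le[of n 0] by simp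
  qed
qed

lemma H_surj: "surj H"
proof -
  have "y \<in> range H" for y
  proof -
    obtain n1 where n1: "y \<le> (f ^^ n1) 0" using f_unbounded by blast
    obtain n2 where n2: "(fi ^^ n2) 0 \<le> y" using fi_unbounded by blast
    have h1: "H (of_nat n1) = (f ^^ n1) 0" using H_add_nat[of 0 n1] H_int[of 0] by simp
    have h2: "H (- of_nat n2) = (fi ^^ n2) 0" using H_sub_nat[of 0 n2] H_int[of 0] by simp
    have "- of_nat n2 \<le> (of_nat n1 :: real)" by simp
    then obtain x where "H x = y"
      using IVT'[of H "- of_nat n2" y "of_nat n1"] h1 h2 n1 n2
        continuous_on_subset[OF H_cont] by auto
    then show ?thesis by auto
  qed
  then show ?thesis by auto
qed

definition "hh = inv_into UNIV H"

lemma H_hh[simp]: "H (hh x) = x" unfolding hh_def by (simp add: H_surj surj_f_inv_f)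
lemma hh_H[simp]: "hh (H x) = x" unfolding hh_def
  by (meson H_sm inv_f_f strict_mono_imp_inj_on)
lemma hh_cont: "continuous_on UNIV hh"
  unfolding hh_def using strict_mono_surj_homeo[OF H_sm H_surj] by simp

end



definition ecirc :: "real \<Rightarrow> complex" where
  "ecirc t = exp (complex_of_real (2*pi*t) * \<i>)"

lemma ecirc_eq_iff: "ecirc u = ecirc t \<longleftrightarrow> (\<exists>n::int. u = t + of_int n)"
proof
  assume "ecirc u = ecirc t"
  then obtain n where n: "complex_of_real (2*pi*u) * \<i> = complex_of_real (2*pi*t) * \<i> + complex_of_real (real_of_int (2 * n) * pi) * \<i>"
    unfolding ecirc_def exp_eq by blast
  have "2*pi*u = 2*pi*t + real_of_int (2*n) * pi"
    using arg_cong[OF n, of Im] by simp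
  then have "2*pi*u = 2*pi*(t + of_int n)" by (simp add: algebra_simps)
  then show "\<exists>n::int. u = t + of_int n" by (intro exI[of _ n]) simp
next
  assume "\<exists>n::int. u = t + of_int n"
  then obtain n::int where n: "u = t + of_int n" by blast
  have "complex_of_real (2*pi*u) * \<i> = complex_of_real (2*pi*t) * \<i> + complex_of_real (real_of_int (2 * n) * pi) * \<i>"
    by (simp add: n algebra_simps)
  then show "ecirc u = ecirc t" unfolding ecirc_def exp_eq by blast
qed

lemma ecirc_norm: "norm (ecirc t) = 1"
  unfolding ecirc_def by (metis mult.commute norm_exp_i_times)

lemma ecirc_cont: "continuous_on UNIV ecirc"
  unfolding ecirc_def by (intro continuous_intros)

lemma ecirc_onto01: "z \<in> sphere 0 1 \<Longrightarrow> \<exists>t\<in>{0..1}. ecirc t = z"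
proof -
  assume z: "z \<in> sphere 0 1"
  then have nz: "z \<noteq> 0" and nz1: "norm z = 1" by auto
  have "sgn z = z" using nz1 by (simp add: sgn_div_norm)
  then have "cis (Arg z) = z" using cis_Arg[OF nz] by simp
  then have e0: "ecirc (Arg z / (2*pi)) = z"
    unfolding ecirc_def cis_conv_exp by (simp add: mult.commute)
  define t0 where "t0 = Arg z / (2*pi)"
  define t where "t = t0 - of_int \<lfloor>t0\<rfloor>"
  have "ecirc t = ecirc t0" unfolding ecirc_eq_iff t_def by (intro exI[of _ "- \<lfloor>t0\<rfloor>"]) simp
  moreover have "t \<in> {0..1}" unfolding t_def by simp linarith
  ultimately show ?thesis using e0 t0_def by auto
qed

lemma ecirc_image01: "ecirc ` {0..1} = sphere 0 1"
  using ecirc_onto01 ecirc_norm by fastforce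

context shift
begin

definition pp :: "real \<Rightarrow> complex" where "pp x = ecirc (hh x)"

lemma pp_cont: "continuous_on UNIV pp"
  unfolding pp_def using continuous_on_compose2[OF ecirc_cont hh_cont] by simp

lemma pp_sphere: "pp x \<in> sphere 0 1" unfolding pp_def by (simp add: ecirc_norm)

lemma pp_image: "pp ` UNIV = sphere 0 1"
proof
  show "pp ` UNIV \<subseteq> sphere 0 1" using pp_sphere by auto
  show "sphere 0 1 \<subseteq> range pp"
  proof
    fix z :: complex assume "z \<in> sphere 0 1"
    then obtain t where "ecirc t = z" using ecirc_onto01 by blast
    then have "pp (H t) = z" by (simp add: pp_def)
    then show "z \<in> range pp" by blast
  qed
qed

lemma pp_cmap: "continuous_map euclidean (top_of_set (sphere 0 1)) pp"
  by (rule continuous_map_into_subtopology) (use pp_cont pp_sphere in \<open>auto simp: continuous_map_iff_continuous2\<close>)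

lemma pp_quot: "quotient_map euclidean (top_of_set (sphere 0 1)) pp"
  unfolding quotient_map_def
proof (intro conjI allI impI)
  show "pp ` topspace euclidean = topspace (top_of_set (sphere 0 1))"
    using pp_image by simp
  fix U assume U: "U \<subseteq> topspace (top_of_set (sphere (0::complex) 1))"
  then have U': "U \<subseteq> sphere 0 1" by simp
  show "openin euclidean {x \<in> topspace euclidean. pp x \<in> U} = openin (top_of_set (sphere 0 1)) U"
  proof
    assume "openin (top_of_set (sphere 0 1)) U"
    then show "openin euclidean {x \<in> topspace euclidean. pp x \<in> U}"
      using openin_continuous_map_preimage[OF pp_cmap] by blast
  next
    assume "openin euclidean {x \<in> topspace euclidean. pp x \<in> U}"
    then have o1: "open {x. pp x \<in> U}" by simp
    have eqH: "{t. ecirc t \<in> U} = H -` {x. pp x \<in> U}" by (auto simp: pp_def)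
    have "\<forall>B. open B \<longrightarrow> open (H -` B \<inter> UNIV)"
      using iffD1[OF continuous_on_open_vimage[OF open_UNIV] H_cont] .
    then have "open (H -` {x. pp x \<in> U} \<inter> UNIV)" using o1 by blast
    then have "open (H -` {x. pp x \<in> U})" by simp
    then have "open {t. ecirc t \<in> U}" by (simp add: eqH)
    then have "openin (top_of_set {0..1}) ({0..1} \<inter> ecirc -` U)"
      by (simp add: openin_open_Int vimage_def)
    then show "openin (top_of_set (sphere 0 1)) U"
      using Abstract_Topology_2.continuous_imp_quotient_map[OF continuous_on_subset[OF ecirc_cont] ecirc_image01 compact_Icc U']
      by simp
  qed
qed

lemma H_shift_int: "hh ((f ^^ n) x) = hh x + of_nat n"
proof -
  have "H (hh x + of_nat n) = (f ^^ n) x" by (simp add: H_add_nat)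
  then show ?thesis by (metis hh_H)
qed

lemma pp_eq_iff: "pp x = pp y \<longleftrightarrow> (\<exists>n. y = (f ^^ n) x \<or> x = (f ^^ n) y)"
proof
  assume "pp x = pp y"
  then obtain k::int where k: "hh x = hh y + of_int k" unfolding pp_def ecirc_eq_iff by blast
  show "\<exists>n. y = (f ^^ n) x \<or> x = (f ^^ n) y"
  proof (cases "0 \<le> k")
    case True
    then have "hh x = hh y + of_nat (nat k)" using k by simp
    then have "H (hh x) = (f ^^ nat k) y" using H_add_nat[of "hh y" "nat k"] by simp
    then show ?thesis by auto
  next
    case False
    then have "hh y = hh x + of_nat (nat (-k))" using k by simp
    then have "H (hh y) = (f ^^ nat (-k)) x" using H_add_nat[of "hh x" "nat (-k)"] by simp
    then show ?thesis by auto
  qed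
next
  assume "\<exists>n. y = (f ^^ n) x \<or> x = (f ^^ n) y"
  then obtain n where "y = (f ^^ n) x \<or> x = (f ^^ n) y" by blast
  then show "pp x = pp y"
  proof
    assume "y = (f ^^ n) x"
    then have "hh x = hh y + of_int (- int n)" using H_shift_int[of n x] by simp
    then show ?thesis unfolding pp_def ecirc_eq_iff by blast
  next
    assume "x = (f ^^ n) y"
    then have "hh x = hh y + of_int (int n)" using H_shift_int[of n y] by simp
    then show ?thesis unfolding pp_def ecirc_eq_iff by blast
  qed
qed

lemma lift_homeo:
  assumes cg: "continuous_on UNIV g" and cgi: "continuous_on UNIV gi"
    and gig: "\<And>x. gi (g x) = x" and ggi: "\<And>x. g (gi x) = x"
    and comm: "\<And>x. g (f x) = f (g x)"
  shows "\<exists>k k'. homeomorphism (sphere 0 1) (sphere 0 1) k k' \<and> (\<forall>x. k (pp x) = pp (g x))"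
proof -
  have commi: "gi (f x) = f (gi x)" for x
  proof -
    have "gi (f x) = gi (f (g (gi x)))" by (simp only: ggi)
    also have "\<dots> = gi (g (f (gi x)))" by (simp only: comm)
    also have "\<dots> = f (gi x)" by (simp only: gig)
    finally show ?thesis .
  qed
  have pres: "pp (u x) = pp (u y)" if "pp x = pp y" and cu: "\<And>x. u (f x) = f (u x)" for u x y
  proof -
    from that(1) obtain n where "y = (f ^^ n) x \<or> x = (f ^^ n) y" unfolding pp_eq_iff by blast
    moreover have fc: "\<And>n z. u ((f^^n) z) = (f^^n) (u z)" by (rule funpow_comm_gen) (rule cu)
    ultimately have "u y = (f ^^ n) (u x) \<or> u x = (f ^^ n) (u y)"
      by (elim disjE) simp_all
    then show ?thesis unfolding pp_eq_iff by blast
  qed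
  have cm: "continuous_map euclidean (top_of_set (sphere 0 1)) (pp \<circ> u)"
    if "continuous_on UNIV u" for u
  proof (rule continuous_map_into_subtopology)
    show "continuous_map euclidean euclidean (pp \<circ> u)" unfolding continuous_map_iff_continuous2
      by (rule continuous_on_compose[OF that continuous_on_subset[OF pp_cont]]) simp
    show "(pp \<circ> u) \<in> topspace euclidean \<rightarrow> sphere 0 1" using pp_sphere by auto
  qed
  have Pg: "\<And>x y. x \<in> topspace euclidean \<Longrightarrow> y \<in> topspace euclidean \<Longrightarrow> pp x = pp y \<Longrightarrow> (pp \<circ> g) x = (pp \<circ> g) y"
    unfolding comp_def by (erule pres[where u=g, OF _ comm])
  have Pgi: "\<And>x y. x \<in> topspace euclidean \<Longrightarrow> y \<in> topspace euclidean \<Longrightarrow> pp x = pp y \<Longrightarrow> (pp \<circ> gi) x = (pp \<circ> gi) y"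
    unfolding comp_def by (erule pres[where u=gi, OF _ commi])
  have "\<exists>k. continuous_map (top_of_set (sphere 0 1)) (top_of_set (sphere 0 1)) k \<and> (\<forall>x. k (pp x) = pp (g x))"
  proof (rule quotient_map_lift_exists[OF pp_quot cm[OF cg]])
    show "\<And>x y. x \<in> topspace euclidean \<Longrightarrow> y \<in> topspace euclidean \<Longrightarrow> pp x = pp y \<Longrightarrow> (pp \<circ> g) x = (pp \<circ> g) y"
      by (rule Pg)
  next
    fix ga assume ga: "continuous_map (top_of_set (sphere 0 1)) (top_of_set (sphere 0 1)) ga"
      "ga ` topspace (top_of_set (sphere 0 1)) = (pp \<circ> g) ` topspace euclidean"
      "\<And>x. x \<in> topspace euclidean \<Longrightarrow> ga (pp x) = (pp \<circ> g) x"
    have "\<forall>x. ga (pp x) = pp (g x)" using ga(3) by simp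
    then show "\<exists>k. continuous_map (top_of_set (sphere 0 1)) (top_of_set (sphere 0 1)) k \<and> (\<forall>x. k (pp x) = pp (g x))"
      using ga(1) by blast
  qed
  then obtain k where k: "continuous_map (top_of_set (sphere 0 1)) (top_of_set (sphere 0 1)) k"
    and k2: "\<And>x. k (pp x) = pp (g x)" by blast
  have "\<exists>k. continuous_map (top_of_set (sphere 0 1)) (top_of_set (sphere 0 1)) k \<and> (\<forall>x. k (pp x) = pp (gi x))"
  proof (rule quotient_map_lift_exists[OF pp_quot cm[OF cgi]])
    show "\<And>x y. x \<in> topspace euclidean \<Longrightarrow> y \<in> topspace euclidean \<Longrightarrow> pp x = pp y \<Longrightarrow> (pp \<circ> gi) x = (pp \<circ> gi) y"
      by (rule Pgi)
  next
    fix ga assume ga: "continuous_map (top_of_set (sphere 0 1)) (top_of_set (sphere 0 1)) ga"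
      "ga ` topspace (top_of_set (sphere 0 1)) = (pp \<circ> gi) ` topspace euclidean"
      "\<And>x. x \<in> topspace euclidean \<Longrightarrow> ga (pp x) = (pp \<circ> gi) x"
    have "\<forall>x. ga (pp x) = pp (gi x)" using ga(3) by simp
    then show "\<exists>k. continuous_map (top_of_set (sphere 0 1)) (top_of_set (sphere 0 1)) k \<and> (\<forall>x. k (pp x) = pp (gi x))"
      using ga(1) by blast
  qed
  then obtain k' where k': "continuous_map (top_of_set (sphere 0 1)) (top_of_set (sphere 0 1)) k'"
    and k'2: "\<And>x. k' (pp x) = pp (gi x)" by blast
  have surj: "w \<in> sphere 0 1 \<Longrightarrow> \<exists>x. w = pp x" for w using pp_image by blast
  have "homeomorphism (sphere 0 1) (sphere 0 1) k k'"
  proof (rule homeomorphismI)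
    show "continuous_on (sphere 0 1) k" "k ` sphere 0 1 \<subseteq> sphere 0 1"
      using k by (auto simp: continuous_map_subtopology_eu)
    show "continuous_on (sphere 0 1) k'" "k' ` sphere 0 1 \<subseteq> sphere 0 1"
      using k' by (auto simp: continuous_map_subtopology_eu)
    show "k' (k w) = w" if "w \<in> sphere 0 1" for w
      using surj[OF that] k2 k'2 gig by auto
    show "k (k' w) = w" if "w \<in> sphere 0 1" for w
      using surj[OF that] k2 k'2 ggi by auto
  qed
  then show ?thesis using k2 by blast
qed

end


locale act =
  fixes G :: "('a, 'b) monoid_scheme" and \<psi> :: "'a \<Rightarrow> real \<Rightarrow> real"
  assumes grp: "group G" and oa: "or_action G \<psi>" and mina: "minimal_action G \<psi>"
begin

lemma psi_sm: "g \<in> carrier G \<Longrightarrow> strict_mono (\<psi> g)"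
  using oa by (simp add: or_action_def or_homeo_def)

lemma psi_cont: "g \<in> carrier G \<Longrightarrow> continuous_on UNIV (\<psi> g)"
  using oa unfolding or_action_def or_homeo_def homeomorphism_def by blast

lemma psi_isCont: "g \<in> carrier G \<Longrightarrow> isCont (\<psi> g) x"
  using psi_cont by (simp add: continuous_on_eq_continuous_at)

lemma inv_closed: "g \<in> carrier G \<Longrightarrow> inv\<^bsub>G\<^esub> g \<in> carrier G"
  using grp by (simp add: group.inv_closed)

lemma psi_mult: "g \<in> carrier G \<Longrightarrow> h \<in> carrier G \<Longrightarrow> \<psi> (g \<otimes>\<^bsub>G\<^esub> h) x = \<psi> g (\<psi> h x)"
  using oa unfolding or_action_def by simp

lemma psi_one: "\<psi> \<one>\<^bsub>G\<^esub> x = x"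
  using oa unfolding or_action_def by simp

lemma psi_inv1[simp]: "g \<in> carrier G \<Longrightarrow> \<psi> (inv\<^bsub>G\<^esub> g) (\<psi> g x) = x"
proof -
  assume g: "g \<in> carrier G"
  have "\<psi> (inv\<^bsub>G\<^esub> g) (\<psi> g x) = \<psi> (inv\<^bsub>G\<^esub> g \<otimes>\<^bsub>G\<^esub> g) x"
    using psi_mult[OF inv_closed[OF g] g] by simp
  also have "inv\<^bsub>G\<^esub> g \<otimes>\<^bsub>G\<^esub> g = \<one>\<^bsub>G\<^esub>" using group.l_inv[OF grp g] .
  finally show ?thesis by (simp add: psi_one)
qed

lemma psi_inv2[simp]: "g \<in> carrier G \<Longrightarrow> \<psi> g (\<psi> (inv\<^bsub>G\<^esub> g) x) = x"
proof -
  assume g: "g \<in> carrier G"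
  have "\<psi> g (\<psi> (inv\<^bsub>G\<^esub> g) x) = \<psi> (g \<otimes>\<^bsub>G\<^esub> inv\<^bsub>G\<^esub> g) x"
    using psi_mult[OF g inv_closed[OF g]] by simp
  also have "g \<otimes>\<^bsub>G\<^esub> inv\<^bsub>G\<^esub> g = \<one>\<^bsub>G\<^esub>" using group.r_inv[OF grp g] .
  finally show ?thesis by (simp add: psi_one)
qed

lemma psi_less: "g \<in> carrier G \<Longrightarrow> \<psi> g x < \<psi> g y \<longleftrightarrow> x < y"
  using psi_sm strict_mono_less by blast

lemma psi_le: "g \<in> carrier G \<Longrightarrow> \<psi> g x \<le> \<psi> g y \<longleftrightarrow> x \<le> y"
  using psi_sm strict_mono_less_eq by blast

lemma orbit_dense:
  assumes "a < b"
  shows "\<exists>g\<in>carrier G. a < \<psi> g x \<and> \<psi> g x < b"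
proof -
  have "(a+b)/2 \<in> closure {\<psi> g x | g. g \<in> carrier G}"
    using mina by (simp add: minimal_action_def)
  then obtain y where y: "y \<in> {\<psi> g x | g. g \<in> carrier G}" "dist y ((a+b)/2) < (b-a)/2"
  proof -
    have "(b-a)/2 > 0" using assms by simp
    then show ?thesis using that \<open>(a+b)/2 \<in> _\<close> unfolding closure_approachable by blast
  qed
  then obtain g where g: "g \<in> carrier G" "y = \<psi> g x" by blast
  then have "\<bar>\<psi> g x - (a+b)/2\<bar> < (b-a)/2" using y(2) by (simp add: dist_real_def)
  then have "a < \<psi> g x \<and> \<psi> g x < b" unfolding abs_less_iff by (auto simp: field_simps)
  then show ?thesis using g by blast
qed

definition C :: "real \<Rightarrow> real \<Rightarrow> bool" where
  "C a b \<longleftrightarrow> (\<exists>s p. (\<forall>n. s n \<in> carrier G) \<and> ((\<lambda>n. \<psi> (s n) a) \<longlonglongrightarrow> p) \<and> ((\<lambda>n. \<psi> (s n) b) \<longlonglongrightarrow> p))"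

lemma Inf_img: "g \<in> carrier G \<Longrightarrow> a \<le> b \<Longrightarrow> Inf (\<psi> g ` {a..b}) = \<psi> g a"
  by (rule cInf_eq_minimum) (auto simp: psi_le)

lemma Sup_img: "g \<in> carrier G \<Longrightarrow> a \<le> b \<Longrightarrow> Sup (\<psi> g ` {a..b}) = \<psi> g b"
  by (rule cSup_eq_maximum) (auto simp: psi_le)

lemma contr_iff: "a \<le> b \<Longrightarrow> contractible G \<psi> {a..b} \<longleftrightarrow> C a b"
  unfolding contractible_def C_def
proof (intro iffI; elim exE conjE)
  fix s :: "nat \<Rightarrow> 'a" and p assume ab: "a \<le> b" and s: "\<forall>n. s n \<in> carrier G"
  have e1: "(\<lambda>n. Inf (\<psi> (s n) ` {a..b})) = (\<lambda>n. \<psi> (s n) a)" using s ab Inf_img by auto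
  have e2: "(\<lambda>n. Sup (\<psi> (s n) ` {a..b})) = (\<lambda>n. \<psi> (s n) b)" using s ab Sup_img by auto
  {
    assume "(\<lambda>n. Inf (\<psi> (s n) ` {a..b})) \<longlonglongrightarrow> p" "(\<lambda>n. Sup (\<psi> (s n) ` {a..b})) \<longlonglongrightarrow> p"
    then show "\<exists>s p. (\<forall>n. s n \<in> carrier G) \<and> (\<lambda>n. \<psi> (s n) a) \<longlonglongrightarrow> p \<and> (\<lambda>n. \<psi> (s n) b) \<longlonglongrightarrow> p"
      using s by (intro exI[of _ s] exI[of _ p]) (simp add: e1 e2)
  }
  {
    assume "(\<lambda>n. \<psi> (s n) a) \<longlonglongrightarrow> p" "(\<lambda>n. \<psi> (s n) b) \<longlonglongrightarrow> p"
    then show "\<exists>s p. (\<forall>n. s n \<in> carrier G) \<and> (\<lambda>n. Inf (\<psi> (s n) ` {a..b})) \<longlonglongrightarrow> p \<and> (\<lambda>n. Sup (\<psi> (s n) ` {a..b})) \<longlonglongrightarrow> p"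
      using s by (intro exI[of _ s] exI[of _ p]) (simp add: e1 e2)
  }
qed

lemma C_inv:
  assumes "C a b" "h \<in> carrier G"
  shows "C (\<psi> h a) (\<psi> h b)"
proof -
  obtain s p where s: "\<forall>n. s n \<in> carrier G" "(\<lambda>n. \<psi> (s n) a) \<longlonglongrightarrow> p" "(\<lambda>n. \<psi> (s n) b) \<longlonglongrightarrow> p"
    using assms(1) unfolding C_def by blast
  define s' where "s' n = s n \<otimes>\<^bsub>G\<^esub> inv\<^bsub>G\<^esub> h" for n
  have s'c: "s' n \<in> carrier G" for n
    unfolding s'_def using s(1) assms(2) inv_closed grp by (simp add: group.subgroup_self subgroup.m_closed)
  have "\<psi> (s' n) (\<psi> h x) = \<psi> (s n) x" for n x
    unfolding s'_def using s(1) assms(2) by (simp add: psi_mult inv_closed)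
  then show ?thesis unfolding C_def using s s'c by (intro exI[of _ s'] exI[of _ p]) simp
qed

lemma C_sub:
  assumes "C a b" "a \<le> a'" "a' \<le> b'" "b' \<le> b"
  shows "C a' b'"
proof -
  obtain s p where s: "\<forall>n. s n \<in> carrier G" "(\<lambda>n. \<psi> (s n) a) \<longlonglongrightarrow> p" "(\<lambda>n. \<psi> (s n) b) \<longlonglongrightarrow> p"
    using assms(1) unfolding C_def by blast
  have l: "\<psi> (s n) a \<le> \<psi> (s n) x" "\<psi> (s n) x \<le> \<psi> (s n) b" if "a \<le> x" "x \<le> b" for n x
    using s(1) that by (auto simp: psi_le)
  have "(\<lambda>n. \<psi> (s n) a') \<longlonglongrightarrow> p"
    by (rule tendsto_sandwich[OF _ _ s(2) s(3)]) (use l assms in auto)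
  moreover have "(\<lambda>n. \<psi> (s n) b') \<longlonglongrightarrow> p"
    by (rule tendsto_sandwich[OF _ _ s(2) s(3)]) (use l assms in auto)
  ultimately show ?thesis unfolding C_def using s(1) by blast
qed

end


locale act2 = act +
  assumes A4: "\<exists>I. is_interval I \<and> bounded I \<and> (\<exists>a b. a < b \<and> a \<in> I \<and> b \<in> I) \<and> contractible G \<psi> I"
    and A5: "\<exists>I. is_interval I \<and> bounded I \<and> I \<noteq> {} \<and> \<not> contractible G \<psi> I"
begin

lemma bounded_bounds:
  assumes "bounded (I::real set)"
  obtains B where "\<And>x. x \<in> I \<Longrightarrow> -B \<le> x \<and> x \<le> B"
  using assms unfolding bounded_real by (metis abs_le_iff minus_le_iff)

lemma C_exists: "\<exists>a b. a < b \<and> C a b"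
proof -
  obtain I a b where I: "bounded I" "a < b" "a \<in> I" "b \<in> I" "contractible G \<psi> I"
    using A4 by blast
  obtain B where B: "\<And>x. x \<in> I \<Longrightarrow> -B \<le> x \<and> x \<le> B" using bounded_bounds[OF I(1)] by blast
  obtain s p where s: "\<forall>n. s n \<in> carrier G" "(\<lambda>n. Inf (\<psi> (s n) ` I)) \<longlonglongrightarrow> p"
      "(\<lambda>n. Sup (\<psi> (s n) ` I)) \<longlonglongrightarrow> p"
    using I(5) unfolding contractible_def by blast
  have bb: "bdd_below (\<psi> (s n) ` I)" "bdd_above (\<psi> (s n) ` I)" for n
  proof -
    have "\<psi> (s n) (-B) \<le> y \<and> y \<le> \<psi> (s n) B" if "y \<in> \<psi> (s n) ` I" for y
      using that B s(1) by (auto simp: psi_le)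
    then show "bdd_below (\<psi> (s n) ` I)" "bdd_above (\<psi> (s n) ` I)"
      by (meson bdd_belowI bdd_aboveI)+
  qed
  have l1: "Inf (\<psi> (s n) ` I) \<le> \<psi> (s n) x" "\<psi> (s n) x \<le> Sup (\<psi> (s n) ` I)" if "x \<in> I" for x n
    using that bb[of n] by (auto intro: cInf_lower cSup_upper)
  have "(\<lambda>n. \<psi> (s n) a) \<longlonglongrightarrow> p"
    by (rule tendsto_sandwich[OF _ _ s(2) s(3)]) (use l1 I in auto)
  moreover have "(\<lambda>n. \<psi> (s n) b) \<longlonglongrightarrow> p"
    by (rule tendsto_sandwich[OF _ _ s(2) s(3)]) (use l1 I in auto)
  ultimately show ?thesis using I(2) s(1) unfolding C_def by blast
qed

lemma nonC_exists: "\<exists>c d. c \<le> d \<and> \<not> C c d"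
proof -
  obtain J where J: "bounded J" "J \<noteq> {}" "\<not> contractible G \<psi> J" using A5 by blast
  obtain B where B: "\<And>x. x \<in> J \<Longrightarrow> -B \<le> x \<and> x \<le> B" using bounded_bounds[OF J(1)] by blast
  have bJ: "bdd_below J" "bdd_above J" using B by (meson bdd_belowI bdd_aboveI)+
  define c where "c = Inf J"
  define d where "d = Sup J"
  obtain x0 where x0: "x0 \<in> J" using J(2) by blast
  have cx: "c \<le> x" "x \<le> d" if "x \<in> J" for x
    unfolding c_def d_def using that bJ by (auto intro: cInf_lower cSup_upper)
  have cd: "c \<le> d" using cx[OF x0] by simp
  have "\<not> C c d"
  proof
    assume "C c d"
    then obtain s p where s: "\<forall>n. s n \<in> carrier G" "(\<lambda>n. \<psi> (s n) c) \<longlonglongrightarrow> p" "(\<lambda>n. \<psi> (s n) d) \<longlonglongrightarrow> p"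
      unfolding C_def by blast
    have im: "\<psi> (s n) c \<le> y \<and> y \<le> \<psi> (s n) d" if "y \<in> \<psi> (s n) ` J" for y n
      using that cx s(1) by (auto simp: psi_le)
    have ne: "\<psi> (s n) ` J \<noteq> {}" for n using J(2) by simp
    have i1: "\<psi> (s n) c \<le> Inf (\<psi> (s n) ` J)" for n using im ne by (meson cInf_greatest)
    have i2: "Inf (\<psi> (s n) ` J) \<le> \<psi> (s n) d" for n
      using im ne by (meson cInf_lower bdd_belowI imageI x0 order.trans)
    have i3: "\<psi> (s n) c \<le> Sup (\<psi> (s n) ` J)" for n
      using im ne by (meson cSup_upper bdd_aboveI imageI x0 order.trans)
    have i4: "Sup (\<psi> (s n) ` J) \<le> \<psi> (s n) d" for n using im ne by (meson cSup_least)
    have "(\<lambda>n. Inf (\<psi> (s n) ` J)) \<longlonglongrightarrow> p"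
      by (rule tendsto_sandwich[OF _ _ s(2) s(3)]) (use i1 i2 in auto)
    moreover have "(\<lambda>n. Sup (\<psi> (s n) ` J)) \<longlonglongrightarrow> p"
      by (rule tendsto_sandwich[OF _ _ s(2) s(3)]) (use i3 i4 in auto)
    ultimately have "contractible G \<psi> J" unfolding contractible_def using s(1) by blast
    then show False using J(3) by simp
  qed
  then show ?thesis using cd by blast
qed

abbreviation "S x \<equiv> {y. y > x \<and> contractible G \<psi> {x..y}}"
abbreviation "\<phi> \<equiv> contr_sup G \<psi>"

lemma S_eq: "y \<in> S x \<longleftrightarrow> x < y \<and> C x y"
  using contr_iff[of x y] by auto

lemma S_ne: "S x \<noteq> {}"
proof -
  obtain a b where ab: "a < b" "C a b" using C_exists by blast
  obtain g where g: "g \<in> carrier G" "a < \<psi> g x" "\<psi> g x < b" using orbit_dense[OF ab(1)] by blast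
  have "C (\<psi> g x) b" using C_sub[OF ab(2)] g by simp
  then have "C (\<psi> (inv\<^bsub>G\<^esub> g) (\<psi> g x)) (\<psi> (inv\<^bsub>G\<^esub> g) b)" using C_inv inv_closed g(1) by blast
  then have "C x (\<psi> (inv\<^bsub>G\<^esub> g) b)" using g(1) by simp
  moreover have "x < \<psi> (inv\<^bsub>G\<^esub> g) b"
    using g psi_less[OF inv_closed[OF g(1)], of "\<psi> g x" b] by simp
  ultimately show ?thesis using S_eq by blast
qed

lemma S_bdd: "bdd_above (S x)"
proof -
  obtain c d where cd: "c \<le> d" "\<not> C c d" using nonC_exists by blast
  obtain g where g: "g \<in> carrier G" "x < \<psi> g c" "\<psi> g c < x + 1" using orbit_dense[of x "x+1" c] by auto
  have "y \<le> \<psi> g d" if "y \<in> S x" for y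
  proof (rule ccontr)
    assume "\<not> y \<le> \<psi> g d"
    moreover have "C x y" using that S_eq by blast
    moreover have "\<psi> g c \<le> \<psi> g d" using cd(1) g(1) by (simp add: psi_le)
    ultimately have "C (\<psi> g c) (\<psi> g d)" using C_sub g(2) by (meson less_imp_le not_le)
    then have "C (\<psi> (inv\<^bsub>G\<^esub> g) (\<psi> g c)) (\<psi> (inv\<^bsub>G\<^esub> g) (\<psi> g d))" using C_inv inv_closed g(1) by blast
    then show False using cd(2) g(1) by simp
  qed
  then show ?thesis by (meson bdd_aboveI)
qed

lemma phi_def': "\<phi> x = Sup (S x)" by (simp add: contr_sup_def)

lemma phi_gt: "x < \<phi> x"
proof -
  obtain y where "y \<in> S x" using S_ne by blast
  then have "x < y" "y \<le> \<phi> x" unfolding phi_def' using cSup_upper[OF _ S_bdd] by auto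
  then show ?thesis by simp
qed

lemma phi_upper: "x < y \<Longrightarrow> C x y \<Longrightarrow> y \<le> \<phi> x"
proof -
  assume "x < y" "C x y"
  then have "y \<in> S x" using S_eq by blast
  then show ?thesis unfolding phi_def' by (rule cSup_upper[OF _ S_bdd])
qed

lemma phi_C: "x < y \<Longrightarrow> y < \<phi> x \<Longrightarrow> C x y"
proof -
  assume xy: "x < y" "y < \<phi> x"
  then obtain y' where "y' \<in> S x" "y < y'" using less_cSup_iff[OF S_ne S_bdd] phi_def' by metis
  then show "C x y" using S_eq C_sub xy(1) by (meson less_imp_le order.refl)
qed

lemma phi_mono: "x \<le> x' \<Longrightarrow> \<phi> x \<le> \<phi> x'"
proof -
  assume xx: "x \<le> x'"
  show ?thesis unfolding phi_def'
  proof (rule cSup_least[OF S_ne])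
    fix y assume y: "y \<in> S x"
    show "y \<le> Sup (S x')"
    proof (cases "y \<le> x'")
      case True then show ?thesis using phi_gt[of x'] phi_def' by simp
    next
      case False
      then have "C x' y" using y S_eq C_sub xx by (meson less_imp_le not_le order.refl)
      then show ?thesis using phi_upper[of x' y] False phi_def' by simp
    qed
  qed
qed

lemma phi_equiv: "g \<in> carrier G \<Longrightarrow> \<phi> (\<psi> g x) = \<psi> g (\<phi> x)"
proof -
  assume g: "g \<in> carrier G"
  have gi: "inv\<^bsub>G\<^esub> g \<in> carrier G" using inv_closed g by blast
  have le: "\<phi> (\<psi> g x) \<le> \<psi> g (\<phi> x)"
    unfolding phi_def'[of "\<psi> g x"]
  proof (rule cSup_least[OF S_ne])
    fix y assume "y \<in> S (\<psi> g x)"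
    then have y: "\<psi> g x < y" "C (\<psi> g x) y" using S_eq by auto
    have "C (\<psi> (inv\<^bsub>G\<^esub> g) (\<psi> g x)) (\<psi> (inv\<^bsub>G\<^esub> g) y)" using C_inv[OF y(2) gi] .
    then have "C x (\<psi> (inv\<^bsub>G\<^esub> g) y)" using g by simp
    moreover have "x < \<psi> (inv\<^bsub>G\<^esub> g) y" using y(1) psi_less[OF gi, of "\<psi> g x" y] g by simp
    ultimately have "\<psi> (inv\<^bsub>G\<^esub> g) y \<le> \<phi> x" using phi_upper by blast
    then have "\<psi> g (\<psi> (inv\<^bsub>G\<^esub> g) y) \<le> \<psi> g (\<phi> x)" using psi_le[OF g] by blast
    then show "y \<le> \<psi> g (\<phi> x)" using g by simp
  qed
  have ge: "\<psi> g (\<phi> x) \<le> \<phi> (\<psi> g x)"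
  proof (rule ccontr)
    assume "\<not> ?thesis"
    then have lt: "\<phi> (\<psi> g x) < \<psi> g (\<phi> x)" by simp
    define z where "z = \<psi> (inv\<^bsub>G\<^esub> g) (\<phi> (\<psi> g x))"
    have "z < \<psi> (inv\<^bsub>G\<^esub> g) (\<psi> g (\<phi> x))" unfolding z_def using lt psi_less[OF gi] by blast
    then have z: "z < \<phi> x" using g by simp
    define y where "y = (max x z + \<phi> x) / 2"
    have y: "x < y" "y < \<phi> x" "z < y" using z phi_gt[of x] unfolding y_def by auto
    have "C x y" using phi_C y by blast
    then have "C (\<psi> g x) (\<psi> g y)" using C_inv g by blast
    moreover have "\<psi> g x < \<psi> g y" using y(1) psi_less[OF g] by blast
    ultimately have "\<psi> g y \<le> \<phi> (\<psi> g x)" using phi_upper by blast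
    moreover have "\<psi> g z < \<psi> g y" using y(3) psi_less[OF g] by blast
    moreover have "\<psi> g z = \<phi> (\<psi> g x)" unfolding z_def using g by simp
    ultimately show False by simp
  qed
  show ?thesis using le ge by simp
qed

end


context act2
begin

lemma phi_inj_eq: "g \<in> carrier G \<Longrightarrow> \<phi> (\<psi> g t) = \<phi> (\<psi> g y) \<Longrightarrow> \<phi> t = \<phi> y"
proof -
  assume g: "g \<in> carrier G" and e: "\<phi> (\<psi> g t) = \<phi> (\<psi> g y)"
  then have "\<psi> g (\<phi> t) = \<psi> g (\<phi> y)" by (simp add: phi_equiv)
  then have "\<psi> (inv\<^bsub>G\<^esub> g) (\<psi> g (\<phi> t)) = \<psi> (inv\<^bsub>G\<^esub> g) (\<psi> g (\<phi> y))" by simp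
  then show ?thesis using g by simp
qed

lemma phi_sm: "strict_mono \<phi>"
proof (rule strict_monoI, rule ccontr)
  fix x x' :: real assume xx: "x < x'" and nlt: "\<not> \<phi> x < \<phi> x'"
  have const: "\<phi> t = \<phi> x" if "x \<le> t" "t \<le> x'" for t
    using phi_mono[OF that(1)] phi_mono[OF that(2)] nlt by simp
  define m where "m = (x + x') / 2"
  define e where "e = (x' - x) / 2"
  have e: "e > 0" using xx by (simp add: e_def)
  have mball: "\<phi> t = \<phi> m" if "\<bar>t - m\<bar> < e" for t
  proof -
    have "x \<le> t" "t \<le> x'" "x \<le> m" "m \<le> x'" using that xx unfolding m_def e_def abs_less_iff
      by (auto simp: field_simps)
    then show ?thesis using const by metis
  qed
  have loc: "\<exists>d>0. \<forall>t. dist t y < d \<longrightarrow> \<phi> t = \<phi> y" for y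
  proof -
    obtain g where g: "g \<in> carrier G" "m - e/2 < \<psi> g y" "\<psi> g y < m + e/2"
      using orbit_dense[of "m - e/2" "m + e/2" y] e by auto
    obtain d where d: "d > 0" "\<And>t. dist t y < d \<Longrightarrow> dist (\<psi> g t) (\<psi> g y) < e/2"
      using psi_isCont[OF g(1), of y] e unfolding continuous_at_eps_delta
      by (metis half_gt_zero)
    have "\<phi> t = \<phi> y" if "dist t y < d" for t
    proof -
      have "\<bar>\<psi> g t - \<psi> g y\<bar> < e/2" using d(2)[OF that] by (simp add: dist_real_def)
      then have "\<bar>\<psi> g t - m\<bar> < e" "\<bar>\<psi> g y - m\<bar> < e" using g(2,3) unfolding abs_less_iff
        by (auto simp: field_simps)
      then have "\<phi> (\<psi> g t) = \<phi> (\<psi> g y)" using mball by metis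
      then show ?thesis using phi_inj_eq g(1) by blast
    qed
    then show ?thesis using d(1) by blast
  qed
  have deriv: "(\<phi> has_real_derivative 0) (at y)" for y
  proof -
    obtain d where d: "d > 0" "\<And>t. dist t y < d \<Longrightarrow> \<phi> t = \<phi> y" using loc by blast
    have "((\<lambda>_. \<phi> y) has_real_derivative 0) (at y within UNIV)" by simp
    then show ?thesis
      by (rule has_field_derivative_transform_within[OF _ d(1)]) (use d(2) in auto)
  qed
  have "\<phi> (\<phi> 0) = \<phi> 0" using DERIV_isconst_all[of \<phi>] deriv by blast
  then show False using phi_gt[of "\<phi> 0"] by simp
qed

lemma phi_dense: "a < b \<Longrightarrow> \<exists>x. a < \<phi> x \<and> \<phi> x < b"
proof -
  assume "a < b"
  then obtain g where g: "g \<in> carrier G" "a < \<psi> g (\<phi> 0)" "\<psi> g (\<phi> 0) < b"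
    using orbit_dense by blast
  then have "\<phi> (\<psi> g 0) = \<psi> g (\<phi> 0)" by (simp add: phi_equiv)
  then show ?thesis using g by metis
qed

lemma phi_isCont: "isCont \<phi> x"
  by (rule strict_mono_dense_isCont[OF phi_sm phi_dense])

lemma phi_surj: "surj \<phi>"
proof -
  have "c \<in> range \<phi>" for c
  proof -
    obtain x1 where x1: "c - 1 < \<phi> x1" "\<phi> x1 < c" using phi_dense[of "c-1" c] by auto
    obtain x2 where x2: "c < \<phi> x2" "\<phi> x2 < c + 1" using phi_dense[of c "c+1"] by auto
    have "x1 \<le> x2"
    proof (rule ccontr)
      assume "\<not> x1 \<le> x2"
      then have "\<phi> x2 < \<phi> x1" using phi_sm by (simp add: strict_mono_less)
      then show False using x1 x2 by simp
    qed
    moreover have "continuous_on {x1..x2} \<phi>"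
      using phi_isCont by (simp add: continuous_at_imp_continuous_on)
    ultimately obtain x where "\<phi> x = c"
      using IVT'[of \<phi> x1 c x2] x1 x2 by auto
    then show ?thesis by blast
  qed
  then show ?thesis by blast
qed

lemma phi_homeo: "homeomorphism UNIV UNIV \<phi> (inv_into UNIV \<phi>)"
  by (rule strict_mono_surj_homeo(1)[OF phi_sm phi_surj])

lemma phi_or_homeo: "or_homeo \<phi>"
  unfolding or_homeo_def using phi_homeo phi_sm by blast

end

theorem mainTheorem6:
  fixes G :: "('a, 'b) monoid_scheme" and \<psi> :: "'a \<Rightarrow> real \<Rightarrow> real"
  assumes "fin_gen_group G"
    and "or_action G \<psi>"
    and "minimal_action G \<psi>"
    and "\<exists>I. is_interval I \<and> bounded I \<and> (\<exists>a b. a < b \<and> a \<in> I \<and> b \<in> I) \<and> contractible G \<psi> I"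
    and "\<exists>I. is_interval I \<and> bounded I \<and> I \<noteq> {} \<and> \<not> contractible G \<psi> I"
  shows "(\<forall>x. {y. y > x \<and> contractible G \<psi> {x..y}} \<noteq> {}
              \<and> bdd_above {y. y > x \<and> contractible G \<psi> {x..y}})
    \<and> or_homeo (contr_sup G \<psi>)
    \<and> (\<forall>x. contr_sup G \<psi> x > x)
    \<and> (\<forall>g\<in>carrier G. contr_sup G \<psi> \<circ> \<psi> g = \<psi> g \<circ> contr_sup G \<psi>)
    \<and> (\<exists>p :: real \<Rightarrow> complex.
         quotient_map euclidean (subtopology euclidean (sphere 0 1)) p
       \<and> (\<forall>x y. p x = p y \<longleftrightarrow>
             (\<exists>n. y = (contr_sup G \<psi> ^^ n) x \<or> x = (contr_sup G \<psi> ^^ n) y))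
       \<and> (\<forall>g\<in>carrier G. \<exists>h h'. homeomorphism (sphere 0 1) (sphere 0 1) h h'
             \<and> (\<forall>x. h (p x) = p (\<psi> g x))))"
proof -
  have grp: "group G" using assms(1) by (simp add: fin_gen_group_def)
  interpret act2 G \<psi>
    using grp assms(2-5) by (simp add: act2_def act_def act2_axioms_def)
  interpret sh: shift "contr_sup G \<psi>" "inv_into UNIV (contr_sup G \<psi>)"
    by unfold_locales (rule phi_homeo, rule phi_sm, rule phi_gt)
  have c1: "\<forall>x. {y. y > x \<and> contractible G \<psi> {x..y}} \<noteq> {}
              \<and> bdd_above {y. y > x \<and> contractible G \<psi> {x..y}}"
    by (intro allI conjI S_ne S_bdd)
  have c4: "\<forall>g\<in>carrier G. contr_sup G \<psi> \<circ> \<psi> g = \<psi> g \<circ> contr_sup G \<psi>"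
    by (auto simp: phi_equiv)
  have c5: "\<forall>g\<in>carrier G. \<exists>h h'. homeomorphism (sphere 0 1) (sphere 0 1) h h'
             \<and> (\<forall>x. h (sh.pp x) = sh.pp (\<psi> g x))"
  proof
    fix g assume g: "g \<in> carrier G"
    show "\<exists>h h'. homeomorphism (sphere 0 1) (sphere 0 1) h h' \<and> (\<forall>x. h (sh.pp x) = sh.pp (\<psi> g x))"
    proof (rule sh.lift_homeo)
      show "continuous_on UNIV (\<psi> g)" using psi_cont[OF g] .
      show "continuous_on UNIV (\<psi> (inv\<^bsub>G\<^esub> g))" using psi_cont[OF inv_closed[OF g]] .
      show "\<psi> (inv\<^bsub>G\<^esub> g) (\<psi> g x) = x" for x using g by simp
      show "\<psi> g (\<psi> (inv\<^bsub>G\<^esub> g) x) = x" for x using g by simp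
      show "\<psi> g (contr_sup G \<psi> x) = contr_sup G \<psi> (\<psi> g x)" for x using g by (simp add: phi_equiv)
    qed
  qed
  show ?thesis
    using c1 phi_or_homeo phi_gt c4 c5 sh.pp_quot sh.pp_eq_iff by blast
qed

end
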